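(* Let $(\lambda_k)_{k=-\infty}^\infty$ be a strictly increasing sequence of real numbers and $\delta_k:=\min\{\lambda_k-\lambda_{k-1},\lambda_{k+1}-\lambda_k\}$. Then for every positive integer $N$ and all nonnegative real numbers $t_1,\dots,t_N$, $$\sum_{m=1}^N\sum_{\substack{n=1\\ n\ne m}}^N\frac{\delta_m\delta_nt_mt_n}{(\lambda_m-\lambda_n)^2}\le\frac{\pi^2}{3}\sum_{n=1}^N t_n^2.$$ *)

theory Defs
  imports Complex_Main
begin

definition gap :: "(int \<Rightarrow> real) \<Rightarrow> int \<Rightarrow> real" where
  "gap lam k = min (lam k - lam (k - 1)) (lam (k + 1) - lam k)"

end

theory Submission
  imports Defs "HOL-Analysis.Analysis"
begin


definition V :: "real \<Rightarrow> real" where "V a = (\<Sum>k. 1 / (a + real k)^2)"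

lemma V_summable: assumes "a \<ge> 1" shows "summable (\<lambda>k. 1 / (a + real k)^2)"
proof (rule summable_comparison_test')
  show "summable (\<lambda>k. 1 / (real k + 1)^2)"
    using inverse_squares_sums by (auto simp: sums_iff add.commute)
  fix k :: nat assume "k \<ge> 0"
  have "(real k + 1)^2 \<le> (a + real k)^2" using assms by (intro power_mono) auto
  moreover have "0 < (a + real k)^2 * (real k + 1)^2" using assms by (intro mult_pos_pos) auto
  ultimately have "1 / (a + real k)^2 \<le> 1 / (real k + 1)^2"
    by (intro divide_left_mono) auto
  then show "norm (1 / (a + real k)^2) \<le> 1 / (real k + 1)^2" by simp
qed

lemma V_sums: "a \<ge> 1 \<Longrightarrow> (\<lambda>k. 1 / (a + real k)^2) sums V a"
  using V_summable unfolding V_def by (simp add: summable_sums)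

lemma V_nonneg: "a \<ge> 1 \<Longrightarrow> V a \<ge> 0"
  unfolding V_def by (intro suminf_nonneg V_summable) auto

lemma V_one: "V 1 = pi^2 / 6"
proof -
  have "(\<lambda>k. 1 / (1 + real k)^2) sums (pi^2/6)"
    using inverse_squares_sums by (simp add: add.commute)
  then show ?thesis using V_sums[of 1] sums_unique2 by blast
qed

lemma V_tendsto: "a \<ge> 1 \<Longrightarrow> (\<lambda>k. c / (a + real k)^2) \<longlonglongrightarrow> 0"
  using tendsto_mult_right_zero[OF summable_LIMSEQ_zero[OF V_summable], of a c] by simp

lemma tangent: fixes y c :: real assumes "y > 0" "c > 0" shows "1 / y^2 \<ge> 1/c^2 - 2*(y-c)/c^3"
proof -
  have "0 \<le> (c-y)^2*(c+2*y)" using assms by simp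
  hence "3*y^2*c - 2*y^3 \<le> c^3" by (simp add: algebra_simps power2_eq_square power3_eq_cube)
  hence "(3*y^2*c - 2*y^3) / (y^2*c^3) \<le> c^3 / (y^2*c^3)"
    using assms by (intro divide_right_mono) auto
  moreover have "(3*y^2*c - 2*y^3) / (y^2*c^3) = 1/c^2 - 2*(y-c)/c^3"
    using assms by (simp add: field_simps power2_eq_square power3_eq_cube)
  moreover have "c^3 / (y^2*c^3) = 1/y^2" using assms by simp
  ultimately show ?thesis by simp
qed

lemma conv1: fixes u v :: real assumes "v > 0" "0 \<le> u" "u \<le> 1"
  shows "u * (1/v^2 - 1/(v+1)^2) \<le> 1/v^2 - 1/(v+u)^2"
proof -
  define c where "c = v + u"
  have c: "c > 0" using assms unfolding c_def by linarith
  have t1: "1/v^2 \<ge> 1/c^2 - 2*(v-c)/c^3" using tangent[OF assms(1) c] .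
  have t2: "1/(v+1)^2 \<ge> 1/c^2 - 2*(v+1-c)/c^3" using tangent[of "v+1" c] assms c by simp
  have "(1-u) * (1/v^2) \<ge> (1-u) * (1/c^2 - 2*(v-c)/c^3)" using t1 assms by (intro mult_left_mono) auto
  moreover have "u * (1/(v+1)^2) \<ge> u * (1/c^2 - 2*(v+1-c)/c^3)" using t2 assms by (intro mult_left_mono) auto
  moreover have "(1-u) * (1/c^2 - 2*(v-c)/c^3) + u * (1/c^2 - 2*(v+1-c)/c^3) = 1/c^2"
    using c unfolding c_def by (simp add: field_simps)
  ultimately have h: "1/c^2 \<le> (1-u) * (1/v^2) + u * (1/(v+1)^2)" by linarith
  have "u * (1/v^2 - 1/(v+1)^2) = 1/v^2 - ((1-u) * (1/v^2) + u * (1/(v+1)^2))"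
    by (simp add: algebra_simps diff_divide_distrib[symmetric] add_divide_distrib[symmetric])
  then show ?thesis using h unfolding c_def by linarith
qed

lemma conv2: fixes u v :: real assumes "v > 0" "1 \<le> u"
  shows "u/(v-1+u)^2 - u/(v+u)^2 \<le> 1/v^2 - 1/(v+u)^2"
proof -
  define c where "c = v + u - 1"
  have c: "c > 0" using assms unfolding c_def by linarith
  have t1: "1/v^2 \<ge> 1/c^2 - 2*(v-c)/c^3" using tangent[OF assms(1) c] .
  have t2: "1/(v+u)^2 \<ge> 1/c^2 - 2*(v+u-c)/c^3" using tangent[of "v+u" c] assms c by simp
  have "(u-1) * (1/(v+u)^2) \<ge> (u-1) * (1/c^2 - 2*(v+u-c)/c^3)" using t2 assms by (intro mult_left_mono) auto
  moreover have "(1/c^2 - 2*(v-c)/c^3) + (u-1) * (1/c^2 - 2*(v+u-c)/c^3) = u/c^2"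
    using c unfolding c_def by (simp add: field_simps)
  moreover have "v - 1 + u = c" by (simp add: c_def)
  ultimately have h: "u/c^2 \<le> 1/v^2 + (u-1) * (1/(v+u)^2)" using t1 by linarith
  have "u/(v-1+u)^2 - u/(v+u)^2 = u/c^2 - u * (1/(v+u)^2)" unfolding c_def by (simp add: algebra_simps)
  moreover have "(u-1) * (1/(v+u)^2) = u * (1/(v+u)^2) - 1/(v+u)^2" by (simp add: algebra_simps diff_divide_distrib[symmetric] add_divide_distrib[symmetric])
  ultimately show ?thesis using h by linarith
qed

lemma bellman: assumes "a \<ge> 1" "u \<ge> 0"
  shows "u / (max a (a - 1 + u))^2 + V (a + u) \<le> V a"
proof (cases "u \<le> 1")
  case True
  have m: "max a (a - 1 + u) = a" using True by simp
  have s1: "(\<lambda>k. u/(a + real k)^2 - u/(a + real (Suc k))^2) sums (u/(a + real 0)^2 - 0)"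
    by (rule telescope_sums'[OF V_tendsto[OF assms(1)]])
  have s2: "(\<lambda>k. 1/(a + real k)^2 - 1/(a + u + real k)^2) sums (V a - V (a+u))"
    by (intro sums_diff V_sums) (use assms in auto)
  have "u/(a + real 0)^2 - 0 \<le> V a - V (a+u)"
  proof (rule sums_le[OF _ s1 s2])
    fix k :: nat
    have "u * (1/(a+k)^2 - 1/(a+k+1)^2) \<le> 1/(a+k)^2 - 1/(a+k+u)^2"
      using conv1[of "a + real k" u] assms True by (simp add: add_ac)
    then show "u/(a + real k)^2 - u/(a + real (Suc k))^2 \<le> 1/(a + real k)^2 - 1/(a + u + real k)^2"
      by (simp add: algebra_simps)
  qed
  then show ?thesis using m by simp
next
  case False
  have m: "max a (a - 1 + u) = a - 1 + u" using False by simp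
  have s1: "(\<lambda>k. u/((a-1+u) + real k)^2 - u/((a-1+u) + real (Suc k))^2) sums (u/((a-1+u) + real 0)^2 - 0)"
    by (rule telescope_sums'[OF V_tendsto]) (use False assms in auto)
  have s2: "(\<lambda>k. 1/(a + real k)^2 - 1/(a + u + real k)^2) sums (V a - V (a+u))"
    by (intro sums_diff V_sums) (use assms in auto)
  have "u/((a-1+u) + real 0)^2 - 0 \<le> V a - V (a+u)"
  proof (rule sums_le[OF _ s1 s2])
    fix k :: nat
    have "u/((a+k)-1+u)^2 - u/((a+k)+u)^2 \<le> 1/(a+k)^2 - 1/((a+k)+u)^2"
      using conv2[of "a + real k" u] assms False by (simp add: add_ac)
    then show "u/((a-1+u) + real k)^2 - u/((a-1+u) + real (Suc k))^2 \<le> 1/(a + real k)^2 - 1/(a + u + real k)^2"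
      by (simp add: algebra_simps)
  qed
  then show ?thesis using m by simp
qed

lemma core:
  fixes d :: real and del x :: "nat \<Rightarrow> real"
  assumes d: "d > 0" and del: "\<And>j. del j \<ge> 0"
    and x1: "\<And>j. j \<ge> 1 \<Longrightarrow> x j \<ge> d + (\<Sum>i\<in>{1..<j}. del i)"
    and x2: "\<And>j. j \<ge> 1 \<Longrightarrow> x j \<ge> (\<Sum>i\<in>{1..j}. del i)"
  shows "(\<Sum>j\<in>{1..K}. d * del j / (x j)^2) \<le> pi^2/6"
proof -
  define u where "u i = del i / d" for i
  define a where "a j = 1 + (\<Sum>i\<in>{1..<j}. u i)" for j
  define M where "M j = max (a j) (a j - 1 + u j)" for j
  have u0: "u i \<ge> 0" for i using del d by (simp add: u_def)
  have a1: "a j \<ge> 1" for j unfolding a_def using u0 by (simp add: sum_nonneg)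
  have aS: "a (Suc j) = a j + u j" if "j \<ge> 1" for j
    using that unfolding a_def by (simp add: sum.atLeastLessThan_Suc)
  have ind: "(\<Sum>j\<in>{1..K}. u j / (M j)^2) + V (a (Suc K)) \<le> V 1" for K
  proof (induction K)
    case 0
    then show ?case by (simp add: a_def)
  next
    case (Suc K)
    have "u (Suc K) / (M (Suc K))^2 + V (a (Suc (Suc K))) \<le> V (a (Suc K))"
    proof -
      have "a (Suc (Suc K)) = a (Suc K) + u (Suc K)" by (rule aS) simp
      then show ?thesis unfolding M_def using bellman[OF a1 u0] by simp
    qed
    then show ?case using Suc.IH by (simp add: sum.cl_ivl_Suc)
  qed
  have termb: "d * del j / (x j)^2 \<le> u j / (M j)^2" if j: "j \<ge> 1" for j
  proof -
    have "d * a j = d + (\<Sum>i\<in>{1..<j}. del i)"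
      using d unfolding a_def u_def by (simp add: algebra_simps sum_distrib_left)
    hence g1: "d * a j \<le> x j" using x1[OF j] by simp
    have "{1..j} = insert j {1..<j}" using j by auto
    hence "(\<Sum>i\<in>{1..j}. del i) = del j + (\<Sum>i\<in>{1..<j}. del i)" by simp
    moreover have "d * (a j - 1 + u j) = del j + (\<Sum>i\<in>{1..<j}. del i)"
      using d unfolding a_def u_def by (simp add: algebra_simps sum_distrib_left)
    ultimately have g2: "d * (a j - 1 + u j) \<le> x j" using x2[OF j] by simp
    have dM: "d * M j \<le> x j" unfolding M_def using g1 g2 by (simp add: max_def)
    have Mpos: "M j > 0" unfolding M_def using a1[of j] by simp
    have "(d * M j)^2 \<le> (x j)^2" using dM d Mpos by (intro power_mono) auto
    hence "d^2 * u j / (x j)^2 \<le> d^2 * u j / (d * M j)^2"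
      using d Mpos u0[of j] by (intro divide_left_mono mult_nonneg_nonneg mult_pos_pos) auto
    moreover have e: "d * del j = d^2 * u j" using d by (simp add: u_def power2_eq_square)
    moreover have "d^2 * u j / (d * M j)^2 = u j / (M j)^2" using d by (simp add: power_mult_distrib)
    ultimately show ?thesis by (simp only: e)
  qed
  have "(\<Sum>j\<in>{1..K}. d * del j / (x j)^2) \<le> (\<Sum>j\<in>{1..K}. u j / (M j)^2)"
    by (intro sum_mono termb) auto
  also have "\<dots> \<le> V 1" using ind[of K] V_nonneg[OF a1[of "Suc K"]] by linarith
  finally show ?thesis by (simp add: V_one)
qed



lemma gap_le1: "gap lam k \<le> lam k - lam (k - 1)" unfolding gap_def by simp
lemma gap_le2: "gap lam k \<le> lam (k + 1) - lam k" unfolding gap_def by simp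
lemma gap_pos: assumes "strict_mono lam" shows "gap lam k > 0"
proof -
  have "lam (k - 1) < lam k" "lam k < lam (k + 1)" using assms by (auto intro: strict_monoD)
  thus ?thesis unfolding gap_def by simp
qed

lemma right_sum:
  fixes lam :: "int \<Rightarrow> real"
  assumes mono: "strict_mono lam" and fin: "finite A" and gt: "\<And>n. n \<in> A \<Longrightarrow> n > m"
  shows "(\<Sum>n\<in>A. gap lam m * gap lam n / (lam m - lam n)^2) \<le> pi^2/6"
proof (cases "A = {}")
  case True then show ?thesis by simp
next
  case False
  define K where "K = nat (Max A - m)"
  define h where "h j = m + int j" for j
  define f where "f n = gap lam m * gap lam n / (lam m - lam n)^2" for n
  have f0: "f n \<ge> 0" for n unfolding f_def
    by (intro divide_nonneg_nonneg mult_nonneg_nonneg less_imp_le[OF gap_pos[OF mono]]) auto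
  have sub: "A \<subseteq> h ` {1..K}"
  proof
    fix n assume n: "n \<in> A"
    have "n \<le> Max A" using fin n by simp
    hence "nat (n - m) \<in> {1..K}" using gt[OF n] unfolding K_def by auto
    moreover have "n = h (nat (n - m))" using gt[OF n] unfolding h_def by simp
    ultimately show "n \<in> h ` {1..K}" by blast
  qed
  have "(\<Sum>n\<in>A. f n) \<le> (\<Sum>n\<in>h ` {1..K}. f n)"
    by (intro sum_mono2 sub f0) auto
  also have "\<dots> = (\<Sum>j\<in>{1..K}. f (h j))"
    by (simp add: sum.reindex inj_on_def h_def)
  also have "\<dots> = (\<Sum>j\<in>{1..K}. gap lam m * gap lam (h j) / (lam (h j) - lam m)^2)"
    unfolding f_def by (simp add: power2_commute)
  also have "\<dots> \<le> pi^2/6"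
  proof (rule core)
    show "gap lam m > 0" using gap_pos[OF mono] .
    show "\<And>j. gap lam (h j) \<ge> 0" using gap_pos[OF mono] less_imp_le by blast
    have step: "lam (h (Suc j)) - lam m = (lam (h j) - lam m) + (lam (h (Suc j)) - lam (h j))" for j
      by simp
    have hS: "h (Suc j) = h j + 1" for j unfolding h_def by simp
    have "lam (h (Suc j)) - lam m \<ge> gap lam m + (\<Sum>i\<in>{1..<Suc j}. gap lam (h i))" for j
    proof (induction j)
      case 0
      then show ?case using gap_le2[of lam m] by (simp add: h_def)
    next
      case (Suc j)
      have "gap lam (h (Suc j)) \<le> lam (h (Suc (Suc j))) - lam (h (Suc j))"
        using gap_le2[of lam "h (Suc j)"] by (simp add: hS)
      then show ?case using Suc.IH step[of "Suc j"] by (simp add: sum.atLeastLessThan_Suc)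
    qed
    note X = this
    show "lam (h j) - lam m \<ge> gap lam m + (\<Sum>i\<in>{1..<j}. gap lam (h i))" if j1: "j \<ge> 1" for j
    proof -
      obtain j' where "j = Suc j'" using j1 by (cases j) auto
      then show ?thesis using X[of j'] by simp
    qed
    have "lam (h j) - lam m \<ge> (\<Sum>i\<in>{1..j}. gap lam (h i))" for j
    proof (induction j)
      case 0
      then show ?case by (simp add: h_def)
    next
      case (Suc j)
      have "gap lam (h (Suc j)) \<le> lam (h (Suc j)) - lam (h j)"
        using gap_le1[of lam "h (Suc j)"] by (simp add: hS)
      then show ?case using Suc.IH step[of j] by (simp add: sum.cl_ivl_Suc)
    qed
    then show "\<And>j. j \<ge> 1 \<Longrightarrow> lam (h j) - lam m \<ge> (\<Sum>i\<in>{1..j}. gap lam (h i))" by blast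
  qed
  finally show ?thesis unfolding f_def .
qed

lemma left_sum:
  fixes lam :: "int \<Rightarrow> real"
  assumes mono: "strict_mono lam" and fin: "finite A" and lt: "\<And>n. n \<in> A \<Longrightarrow> n < m"
  shows "(\<Sum>n\<in>A. gap lam m * gap lam n / (lam m - lam n)^2) \<le> pi^2/6"
proof -
  define lam' where "lam' k = - lam (- k)" for k
  have mono': "strict_mono lam'" unfolding lam'_def strict_mono_def
    using mono by (auto intro: strict_monoD)
  have g: "gap lam' k = gap lam (- k)" for k
  proof -
    have "- (k - 1) = - k + 1" "- (k + 1) = - k - 1" by simp_all
    then show ?thesis unfolding gap_def lam'_def by (simp only:)
  qed
  have "(\<Sum>n\<in>uminus ` A. gap lam' (-m) * gap lam' n / (lam' (-m) - lam' n)^2) \<le> pi^2/6"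
    by (rule right_sum[OF mono']) (use fin lt in auto)
  also have "(\<Sum>n\<in>uminus ` A. gap lam' (-m) * gap lam' n / (lam' (-m) - lam' n)^2)
      = (\<Sum>n\<in>A. gap lam m * gap lam n / (lam m - lam n)^2)"
    by (subst sum.reindex) (auto simp: g lam'_def power2_commute)
  finally show ?thesis .
qed

lemma row_sum:
  fixes lam :: "int \<Rightarrow> real"
  assumes mono: "strict_mono lam" and fin: "finite S"
  shows "(\<Sum>n\<in>S - {m}. gap lam m * gap lam n / (lam m - lam n)^2) \<le> pi^2/3"
proof -
  have e: "S - {m} = {n\<in>S. n > m} \<union> {n\<in>S. n < m}" by auto
  have "(\<Sum>n\<in>S - {m}. gap lam m * gap lam n / (lam m - lam n)^2)
      = (\<Sum>n\<in>{n\<in>S. n > m}. gap lam m * gap lam n / (lam m - lam n)^2)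
      + (\<Sum>n\<in>{n\<in>S. n < m}. gap lam m * gap lam n / (lam m - lam n)^2)"
    unfolding e by (rule sum.union_disjoint) (use fin in auto)
  also have "\<dots> \<le> pi^2/6 + pi^2/6"
    by (intro add_mono right_sum left_sum mono) (use fin in auto)
  finally show ?thesis by simp
qed

theorem proposition4:
  fixes lam :: "int \<Rightarrow> real" and N :: nat and t :: "int \<Rightarrow> real"
  assumes "strict_mono lam"
    and "N \<ge> 1"
    and "\<And>n. 1 \<le> n \<Longrightarrow> n \<le> int N \<Longrightarrow> t n \<ge> 0"
  shows "(\<Sum>m\<in>{1..int N}. \<Sum>n\<in>{1..int N} - {m}.
            gap lam m * gap lam n * t m * t n / (lam m - lam n)^2)
         \<le> pi^2 / 3 * (\<Sum>n\<in>{1..int N}. (t n)^2)"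
proof -
  define S where "S = {1..int N}"
  define a where "a m n = gap lam m * gap lam n / (lam m - lam n)^2" for m n
  have fin: "finite S" by (simp add: S_def)
  have a0: "a m n \<ge> 0" for m n unfolding a_def
    by (intro divide_nonneg_nonneg mult_nonneg_nonneg less_imp_le[OF gap_pos[OF assms(1)]]) auto
  have asym: "a m n = a n m" for m n unfolding a_def by (simp add: power2_commute)
  have "(\<Sum>m\<in>S. \<Sum>n\<in>S - {m}. gap lam m * gap lam n * t m * t n / (lam m - lam n)^2)
      = (\<Sum>m\<in>S. \<Sum>n\<in>S - {m}. a m n * (t m * t n))"
    unfolding a_def by (intro sum.cong refl) simp
  also have "\<dots> \<le> (\<Sum>m\<in>S. \<Sum>n\<in>S - {m}. a m n * ((t m)^2 + (t n)^2) / 2)"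
  proof (intro sum_mono)
    fix m n
    have "2 * (t m * t n) \<le> (t m)^2 + (t n)^2" using sum_squares_bound[of "t m" "t n"] by simp
    hence "a m n * (2 * (t m * t n)) \<le> a m n * ((t m)^2 + (t n)^2)" using a0 by (rule mult_left_mono)
    thus "a m n * (t m * t n) \<le> a m n * ((t m)^2 + (t n)^2) / 2" by simp
  qed
  also have "\<dots> = (\<Sum>m\<in>S. \<Sum>n\<in>S - {m}. a m n * (t m)^2) / 2 + (\<Sum>m\<in>S. \<Sum>n\<in>S - {m}. a m n * (t n)^2) / 2"
  proof -
    have pw: "a m n * ((t m)^2 + (t n)^2) / 2 = a m n * (t m)^2 / 2 + a m n * (t n)^2 / 2" for m n
      by (simp add: distrib_left add_divide_distrib)
    show ?thesis by (simp only: pw sum.distrib sum_divide_distrib)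
  qed
  also have "(\<Sum>m\<in>S. \<Sum>n\<in>S - {m}. a m n * (t n)^2) = (\<Sum>n\<in>S. \<Sum>m\<in>S - {n}. a m n * (t n)^2)"
  proof -
    have "(\<Sum>m\<in>S. \<Sum>n\<in>{n\<in>S. m \<noteq> n}. a m n * (t n)^2) = (\<Sum>n\<in>S. \<Sum>m\<in>{m\<in>S. m \<noteq> n}. a m n * (t n)^2)"
      by (rule sum.swap_restrict[OF fin fin])
    moreover have "\<And>m. {n\<in>S. m \<noteq> n} = S - {m}" "\<And>n. {m\<in>S. m \<noteq> n} = S - {n}" by auto
    ultimately show ?thesis by simp
  qed
  also have "\<dots> = (\<Sum>m\<in>S. \<Sum>n\<in>S - {m}. a m n * (t m)^2)"
    by (intro sum.cong refl) (simp add: asym)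
  also have "(\<Sum>m\<in>S. \<Sum>n\<in>S - {m}. a m n * (t m)^2) = (\<Sum>m\<in>S. (t m)^2 * (\<Sum>n\<in>S - {m}. a m n))"
    by (simp add: sum_distrib_left mult.commute)
  also have "\<dots> \<le> (\<Sum>m\<in>S. (t m)^2 * (pi^2/3))"
    by (intro sum_mono mult_left_mono) (use row_sum[OF assms(1) fin] in \<open>auto simp: a_def\<close>)
  finally show ?thesis unfolding S_def by (simp add: sum_distrib_left mult.commute)
qed

end
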